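(* The set of points of exact period $3$ under $G$ lies on the curve $1+v+uv=0$ (i.e. $v=-1/(1+u)$), and the Zariski closure in $\mathbb{C}^2$ of this set is this curve (the equation of period three orbits on the $(u,v)$-plane is $v=-1/(1+u)$).
   Context: Let \[ G(u,v)=\left(\frac{-u+v+uv}{u},\ \frac{u^{2}-u+v-u^{2}v-uv+uv^{2}+v^{2}}{u}\right), \] defined for $(u,v)\in\mathbb{C}^2$ with $u\neq 0$. A point $(u,v)$ has exact period $n$ under $G$ if the iterates $G^k(u,v)$, $0\le k\le n-1$, all have nonzero first coordinate, $G^n(u,v)=(u,v)$, and $G^k(u,v)\neq(u,v)$ for $0<k<n$. *)

theory Defs
  imports Complex_Main "HOL-Computational_Algebra.Polynomial"
begin

definition G :: "complex \<times> complex \<Rightarrow> complex \<times> complex" where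
  "G z = (let u = fst z; v = snd z in
     ((- u + v + u * v) / u,
      (u^2 - u + v - u^2 * v - u * v + u * v^2 + v^2) / u))"

definition exact_period :: "nat \<Rightarrow> complex \<times> complex \<Rightarrow> bool" where
  "exact_period n z \<longleftrightarrow>
     (\<forall>k<n. fst ((G ^^ k) z) \<noteq> 0) \<and> (G ^^ n) z = z \<and>
     (\<forall>k. 0 < k \<and> k < n \<longrightarrow> (G ^^ k) z \<noteq> z)"

text \<open>Bivariate complex polynomials are represented as complex poly poly
  (outer variable v, inner variable u); evaluation at (u,v).\<close>
definition eval2 :: "complex poly poly \<Rightarrow> complex \<times> complex \<Rightarrow> complex" where
  "eval2 p z = poly (poly p [:snd z:]) (fst z)"

definition zariski_closure :: "(complex \<times> complex) set \<Rightarrow> (complex \<times> complex) set" where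
  "zariski_closure S = {z. \<forall>p. (\<forall>w\<in>S. eval2 p w = 0) \<longrightarrow> eval2 p z = 0}"

end

theory Submission imports Defs begin

lemma core:
  fixes p q r :: complex
  assumes p0: "p \<noteq> 0" and q0: "q \<noteq> 0"
    and e1: "p*r + q*(p^2 - p*q - 2*p + q) = 0"
    and e2: "q*p + r*(q^2 - q*r - 2*q + r) = 0"
    and e3: "r*q + p*(r^2 - r*p - 2*r + p) = 0"
  shows "1 - q + p*q = 0 \<or> (p = q \<and> q = r)"
proof -
  let ?C = "1 - q + p*q" and ?D = "p - q"
  let ?S2 = "-(p^2*q) + p^2 + p*q^2 + p*q - q^2"
  let ?S3 = "p^2*q + p^2 - p*q^2 - 3*p*q + q^2"
  have i2: "p^2 * (q*p + r*(q^2 - q*r - 2*q + r)) = (p*r + q*(p^2 - p*q - 2*p + q)) *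
     (p^2*q^2 - p^2*q - p*q^3 - p*q*r + p*r + q^3 - q^2) + q * ?C * ?D * ?S2"
    by algebra
  have i3: "p^2 * (r*q + p*(r^2 - r*p - 2*r + p)) = (p*r + q*(p^2 - p*q - 2*p + q)) *
     (-(p^3*q) - p^3 + p^2*q^2 + 2*p^2*q + p^2*r - 2*p^2 - p*q^2 + p*q) + p * ?C * ?D * ?S3"
    by algebra
  have a2: "q * ?C * ?D * ?S2 = 0" using i2 e1 e2 by simp
  have a3: "p * ?C * ?D * ?S3 = 0" using i3 e1 e3 by simp
  show ?thesis
  proof (cases "?C = 0")
    case True then show ?thesis by simp
  next
    case C: False
    show ?thesis
    proof (cases "p = q")
      case True
      with e1 have "p*r - p*p = 0" by (simp add: algebra_simps power2_eq_square)
      then have "p * (r - p) = 0" by (simp add: algebra_simps)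
      with p0 True show ?thesis by simp
    next
      case D: False
      have s2: "?S2 = 0" using a2 q0 C D by simp
      have s3: "?S3 = 0" using a3 p0 C D by simp
      have "2 * p * (p - q) = ?S2 + ?S3" by algebra
      with s2 s3 p0 D show ?thesis by simp
    qed
  qed
qed

lemma Erel:
  fixes a b c x y :: complex
  assumes "a \<noteq> 0" "b \<noteq> 0" "1 + a \<noteq> 0"
    and r1: "a*b = -a + x + a*x" and r1': "b*c = -b + y + b*y"
    and r2: "a*y = a^2 - a + x - a^2*x - a*x + a*x^2 + x^2"
  shows "(1+a)*(1+c) + (1+b)*((1+a)^2 - (1+a)*(1+b) - 2*(1+a) + (1+b)) = 0"
proof -
  have "a*b*(1+a)*((1+a)*(1+c) + (1+b)*((1+a)^2 - (1+a)*(1+b) - 2*(1+a) + (1+b))) = 0"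
    (is "?X * ?E = 0") using r1 r1' r2 by algebra
  moreover have "?X \<noteq> 0" using assms(1-3) by simp
  ultimately show ?thesis by (metis mult_eq_0_iff)
qed

lemma G_rel:
  assumes "fst z \<noteq> 0"
  shows "fst z * fst (G z) = - fst z + snd z + fst z * snd z"
    "fst z * snd (G z) = (fst z)^2 - fst z + snd z - (fst z)^2 * snd z - fst z * snd z + fst z * (snd z)^2 + (snd z)^2"
  using assms by (simp_all add: G_def Let_def)

lemma period3_on_curve:
  assumes "exact_period 3 z"
  shows "1 + snd z + fst z * snd z = 0"
proof -
  from assms have nz: "\<forall>k<3. fst ((G^^k) z) \<noteq> 0" and per: "(G^^3) z = z"
    and nf: "\<forall>k. 0<k \<and> k<3 \<longrightarrow> (G^^k) z \<noteq> z"
    by (simp_all add: exact_period_def)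
  define z1 where "z1 = G z"
  define z2 where "z2 = G z1"
  have h0: "fst z \<noteq> 0" using nz[rule_format, of 0] by simp
  have h1: "fst z1 \<noteq> 0" using nz[rule_format, of 1] by (simp add: z1_def)
  have h2: "fst z2 \<noteq> 0" using nz[rule_format, of 2] by (simp add: z1_def z2_def numeral_2_eq_2)
  have g3: "G z2 = z" using per by (simp add: z1_def z2_def numeral_3_eq_3)
  have n1: "z1 \<noteq> z" using nf[rule_format, of 1] by (simp add: z1_def)
  have n2: "z2 \<noteq> z" using nf[rule_format, of 2] by (simp add: z1_def z2_def numeral_2_eq_2)
  obtain u0 v0 where z: "z = (u0, v0)" by (cases z) auto
  obtain u1 v1 where z1: "z1 = (u1, v1)" by (cases z1) auto
  obtain u2 v2 where z2: "z2 = (u2, v2)" by (cases z2) auto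
  have A0: "u0 * u1 = - u0 + v0 + u0 * v0" "u0 * v1 = u0^2 - u0 + v0 - u0^2 * v0 - u0 * v0 + u0 * v0^2 + v0^2"
    using G_rel[OF h0] z z1 z1_def by auto
  have A1: "u1 * u2 = - u1 + v1 + u1 * v1" "u1 * v2 = u1^2 - u1 + v1 - u1^2 * v1 - u1 * v1 + u1 * v1^2 + v1^2"
    using G_rel[OF h1] z1 z2 z2_def by auto
  have A2: "u2 * u0 = - u2 + v2 + u2 * v2" "u2 * v0 = u2^2 - u2 + v2 - u2^2 * v2 - u2 * v2 + u2 * v2^2 + v2^2"
    using G_rel[OF h2] z2 z g3 by auto
  have u0nz: "u0 \<noteq> 0" using h0 z by simp
  have u1nz: "u1 \<noteq> 0" using h1 z1 by simp
  have u2nz: "u2 \<noteq> 0" using h2 z2 by simp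
  show ?thesis
  proof (cases "u0 = -1 \<or> u1 = -1 \<or> u2 = -1")
    case True
    have t01: "u0 = -1 \<Longrightarrow> u1 = -1" using A0(1) by (simp add: minus_equation_iff)
    have t12: "u1 = -1 \<Longrightarrow> u2 = -1" using A1(1) by (simp add: minus_equation_iff)
    have t20: "u2 = -1 \<Longrightarrow> u0 = -1" using A2(1) by (simp add: minus_equation_iff)
    have all: "u0 = -1" "u1 = -1" "u2 = -1" using True t01 t12 t20 by blast+
    have "v1 = -2 - v0" using A0(2) all by algebra
    moreover have "v2 = -2 - v1" using A1(2) all by algebra
    ultimately have "v2 = v0" by simp
    with all have "z2 = z" using z z2 by simp
    with n2 show ?thesis by simp
  next
    case False
    have e1: "(1+u0)*(1+u2) + (1+u1)*((1+u0)^2 - (1+u0)*(1+u1) - 2*(1+u0) + (1+u1)) = 0"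
      by (rule Erel[where a=u0 and b=u1 and c=u2 and x=v0 and y=v1]) (use False u0nz u1nz A0 A1 in \<open>auto simp: add_eq_0_iff\<close>)
    have e2: "(1+u1)*(1+u0) + (1+u2)*((1+u1)^2 - (1+u1)*(1+u2) - 2*(1+u1) + (1+u2)) = 0"
      by (rule Erel[where a=u1 and b=u2 and c=u0 and x=v1 and y=v2]) (use False u1nz u2nz A1 A2 in \<open>auto simp: add_eq_0_iff\<close>)
    have e3: "(1+u2)*(1+u1) + (1+u0)*((1+u2)^2 - (1+u2)*(1+u0) - 2*(1+u2) + (1+u0)) = 0"
      by (rule Erel[where a=u2 and b=u0 and c=u1 and x=v2 and y=v0]) (use False u2nz u0nz A2 A0 in \<open>auto simp: add_eq_0_iff\<close>)
    have p0: "1 + u0 \<noteq> 0" and q0: "1 + u1 \<noteq> 0" using False by (auto simp: add_eq_0_iff)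
    from core[OF p0 q0 e1 e2 e3]
    show ?thesis
    proof
      assume c: "1 - (1 + u1) + (1 + u0) * (1 + u1) = 0"
      have "1 + v0 + u0*v0 = 1 - (1 + u1) + (1 + u0) * (1 + u1)" using A0(1) by algebra
      with c z show ?thesis by simp
    next
      assume d: "1 + u0 = 1 + u1 \<and> 1 + u1 = 1 + u2"
      have "(v0 - u0) * (1 + u0) = 0" using A0(1) d by algebra
      with p0 have "v0 = u0" by simp
      have "(v1 - u1) * (1 + u1) = 0" using A1(1) d by algebra
      with q0 have "v1 = u1" by simp
      have "z1 = z" using z z1 d \<open>v0 = u0\<close> \<open>v1 = u1\<close> by simp
      with n1 show ?thesis by simp
    qed
  qed
qed

lemma G_curve:
  fixes a :: complex
  assumes "a \<noteq> 0" "1 + a \<noteq> 0"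
  shows "G (a, -1/(1+a)) = (-(1+a)/a, a)"
proof -
  define w where "w = -1/(1+a)"
  have w: "w * (1 + a) = -1" using assms(2) by (simp add: w_def)
  have f: "-a + w + a*w = -(1+a)" using w by algebra
  have s: "a^2 - a + w - a^2*w - a*w + a*w^2 + w^2 = a * a" using w by algebra
  have "G (a, w) = (-(1+a)/a, a)" unfolding G_def Let_def fst_conv snd_conv f s
    using assms(1) by simp
  then show ?thesis by (simp add: w_def)
qed


lemma curve_period:
  fixes a :: complex
  assumes a0: "a \<noteq> 0" and a1: "1 + a \<noteq> 0" and a2: "a^2 + a + 1 \<noteq> 0"
  shows "exact_period 3 (a, -1/(1+a))"
proof -
  define b where "b = -(1+a)/a"
  define c where "c = -1/(1+a)"
  have b0: "b \<noteq> 0" using a0 a1 by (auto simp: b_def add_eq_0_iff)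
  have b1: "1 + b = -1/a" using a0 by (simp add: b_def field_simps)
  have b1': "1 + b \<noteq> 0" using b1 a0 by simp
  have bw: "-1/(1+b) = a" using b1 a0 by simp
  have c0: "c \<noteq> 0" using a1 by (simp add: c_def)
  have c1: "1 + c = a/(1+a)" using a1 by (simp add: c_def field_simps)
  have c1': "1 + c \<noteq> 0" using c1 a0 a1 by simp
  have a1n: "-1 - a \<noteq> 0" using a1 by (auto simp: algebra_simps add_eq_0_iff)
  have a1m: "(1 + a) / (-1 - a) = -1" using a1n by (simp add: field_simps)
  have cb: "-(1+b)/b = c" unfolding b1 b_def c_def using a0 a1 a1n a1m by (simp add: field_simps)
  have cw: "-1/(1+c) = b" unfolding c1 b_def using a0 a1 by (simp add: field_simps)
  have ca: "-(1+c)/c = a" unfolding c1 c_def using a0 a1 by (simp add: field_simps)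
  have g1: "G (a, -1/(1+a)) = (b, -1/(1+b))" using G_curve[OF a0 a1] bw b_def by simp
  have g2: "G (b, -1/(1+b)) = (c, -1/(1+c))" using G_curve[OF b0 b1'] cb cw bw by simp
  have g3: "G (c, -1/(1+c)) = (a, -1/(1+a))" using G_curve[OF c0 c1'] ca cw c_def by simp
  have ba: "b \<noteq> a"
  proof
    assume "b = a"
    then have "-(1+a) = a * a" using a0 by (simp add: b_def field_simps)
    then have "a^2 + a + 1 = 0" by algebra
    with a2 show False by simp
  qed
  have ca': "c \<noteq> a"
  proof
    assume "c = a"
    then have "-1 = a * (1+a)" using a1 by (simp add: c_def field_simps)
    then have "a^2 + a + 1 = 0" by algebra
    with a2 show False by simp
  qed
  have it: "(G^^1) (a, -1/(1+a)) = (b, -1/(1+b))" "(G^^2) (a, -1/(1+a)) = (c, -1/(1+c))"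
    "(G^^3) (a, -1/(1+a)) = (a, -1/(1+a))"
    using g1 g2 g3 by (simp_all add: numeral_2_eq_2 numeral_3_eq_3)
  show ?thesis unfolding exact_period_def
  proof (intro conjI allI impI)
    fix k :: nat assume "k < 3"
    then have "k = 0 \<or> k = 1 \<or> k = 2" by arith
    then show "fst ((G ^^ k) (a, -1/(1+a))) \<noteq> 0" using it a0 b0 c0 by auto
  next
    show "(G ^^ 3) (a, -1/(1+a)) = (a, -1/(1+a))" by (rule it(3))
  next
    fix k :: nat assume "0 < k \<and> k < 3"
    then have "k = 1 \<or> k = 2" by arith
    then show "(G ^^ k) (a, -1/(1+a)) \<noteq> (a, -1/(1+a))" using it ba ca' by auto
  qed
qed

lemma poly_vanish:
  fixes f :: "complex poly poly"
  assumes H: "\<And>a. a \<noteq> 0 \<Longrightarrow> 1 + a \<noteq> 0 \<Longrightarrow> a^2 + a + 1 \<noteq> 0 \<Longrightarrow> eval2 f (a, -1/(1+a)) = 0"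
    and a: "1 + a \<noteq> 0"
  shows "eval2 f (a, -1/(1+a)) = 0"
proof -
  define n where "n = degree f"
  define Q where "Q = (\<Sum>k\<le>n. coeff f k * smult ((-1)^k) ([:1,1:]^(n-k)))"
  have key: "poly Q x = (1+x)^n * eval2 f (x, -1/(1+x))" if x: "1 + x \<noteq> 0" for x
  proof -
    have "eval2 f (x, -1/(1+x)) = poly (\<Sum>k\<le>n. coeff f k * [:-1/(1+x):]^k) x"
      unfolding eval2_def n_def by (simp add: poly_altdef)
    also have "\<dots> = (\<Sum>k\<le>n. poly (coeff f k) x * (-1/(1+x))^k)"
      by (simp add: poly_sum poly_power)
    finally have e: "eval2 f (x, -1/(1+x)) = (\<Sum>k\<le>n. poly (coeff f k) x * (-1/(1+x))^k)" .
    have t: "(1+x)^n * (-1/(1+x))^k = (-1)^k * (1+x)^(n-k)" if "k \<le> n" for k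
    proof -
      have "(1+x)^n = (1+x)^k * (1+x)^(n-k)" using that by (simp add: power_add[symmetric])
      moreover have "(1+x) * (-1/(1+x)) = -1" using x by simp
      then have "((1+x) * (-1/(1+x)))^k = (-1)^k" by simp
      then have q: "(1+x)^k * (-1/(1+x))^k = (-1)^k" by (simp only: power_mult_distrib)
      ultimately show ?thesis by (metis q mult.commute mult.assoc)
    qed
    have "(1+x)^n * eval2 f (x, -1/(1+x)) = (\<Sum>k\<le>n. poly (coeff f k) x * ((1+x)^n * (-1/(1+x))^k))"
      unfolding e by (simp add: sum_distrib_left algebra_simps)
    also have "\<dots> = (\<Sum>k\<le>n. poly (coeff f k) x * ((-1)^k * (1+x)^(n-k)))"
    proof (rule sum.cong)
      fix k assume "k \<in> {..n}"
      then have "k \<le> n" by simp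
      then show "poly (coeff f k) x * ((1+x)^n * (-1/(1+x))^k) = poly (coeff f k) x * ((-1)^k * (1+x)^(n-k))"
        using t[of k] by simp
    qed simp
    also have "\<dots> = poly Q x"
      unfolding Q_def by (simp add: poly_sum poly_power algebra_simps)
    finally show ?thesis by simp
  qed
  have Q0: "Q = 0"
  proof (rule ccontr)
    assume "Q \<noteq> 0"
    then have fin: "finite {x. poly Q x = 0}" by (rule poly_roots_finite)
    have fin2: "finite {x::complex. poly [:1,1,1:] x = 0}" by (rule poly_roots_finite) simp
    have sub: "UNIV - ({0, -1} \<union> {x::complex. poly [:1,1,1:] x = 0}) \<subseteq> {x. poly Q x = 0}"
    proof
      fix x :: complex assume "x \<in> UNIV - ({0, -1} \<union> {x. poly [:1,1,1:] x = 0})"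
      then have x0: "x \<noteq> 0" and x1: "x \<noteq> -1" and x2: "poly [:1,1,1:] x \<noteq> 0" by auto
      have x1': "1 + x \<noteq> 0" using x1 by (auto simp: add_eq_0_iff)
      have x2': "x^2 + x + 1 \<noteq> 0" using x2 by (simp add: algebra_simps power2_eq_square)
      show "x \<in> {x. poly Q x = 0}" using key[OF x1'] H[OF x0 x1' x2'] by simp
    qed
    have "infinite (UNIV - ({0, -1} \<union> {x::complex. poly [:1,1,1:] x = 0}))"
      using fin2 by (simp add: infinite_UNIV_char_0 Diff_infinite_finite)
    with sub fin show False using finite_subset by blast
  qed
  have "(1+a)^n * eval2 f (a, -1/(1+a)) = 0" using key[OF a] Q0 by simp
  with a show ?thesis by simp
qed

theorem mainTheorem5:
  shows "{z. exact_period 3 z} \<subseteq> {(u, v). 1 + v + u * v = 0}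
     \<and> zariski_closure {z. exact_period 3 z} = {(u, v). 1 + v + u * v = 0}"
proof -
  have sub: "{z. exact_period 3 z} \<subseteq> {(u, v). 1 + v + u * v = 0}"
    using period3_on_curve by auto
  define p0 :: "complex poly poly" where "p0 = [: [:1:], [:1,1:] :]"
  have ev: "eval2 p0 w = 1 + snd w + fst w * snd w" for w
    unfolding p0_def eval2_def by (simp add: algebra_simps)
  have c1: "zariski_closure {z. exact_period 3 z} \<subseteq> {(u, v). 1 + v + u * v = 0}"
  proof
    fix z assume z: "z \<in> zariski_closure {z. exact_period 3 z}"
    have "\<forall>w\<in>{z. exact_period 3 z}. eval2 p0 w = 0"
      using period3_on_curve ev by simp
    with z have "eval2 p0 z = 0" unfolding zariski_closure_def by blast
    then show "z \<in> {(u, v). 1 + v + u * v = 0}" using ev by (cases z) simp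
  qed
  have c2: "{(u, v). 1 + v + u * v = 0} \<subseteq> zariski_closure {z. exact_period 3 z}"
  proof
    fix z assume "z \<in> {(u::complex, v). 1 + v + u * v = 0}"
    then obtain u v where z: "z = (u, v)" and e: "1 + v + u * v = 0" by auto
    have u1: "1 + u \<noteq> 0"
    proof
      assume "1 + u = 0"
      then have "u = -1" by (simp add: add_eq_0_iff)
      with e show False by simp
    qed
    have "v * (1+u) = -1" using e by algebra
    then have vv: "v = -1/(1+u)" using u1 by (simp add: field_simps)
    show "z \<in> zariski_closure {z. exact_period 3 z}"
      unfolding zariski_closure_def
    proof (intro CollectI allI impI)
      fix f assume f: "\<forall>w\<in>{z. exact_period 3 z}. eval2 f w = 0"
      have "eval2 f (u, -1/(1+u)) = 0"
        by (rule poly_vanish[OF _ u1]) (use f curve_period in auto)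
      then show "eval2 f z = 0" using z vv by simp
    qed
  qed
  show ?thesis using sub c1 c2 by blast
qed

end
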